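(* Let $\vec K_4$ be the complete digraph on $\{1,2,3,4\}$ (arc $(i,j)$ for all distinct $i,j$). Then $\chi(\partial(\partial(\vec K_4)))\le 3$; explicitly, identifying vertices of $\partial(\partial(\vec K_4))$ with sequences $ijk$ with $i,j,k\in\{1,2,3,4\}$, $i\ne j$, $j\ne k$, the map $c(ijk)=j$ if $j\ne4$ and $c(ijk)=s$ for some $s\in\{1,2,3\}\setminus\{i,k\}$ if $j=4$ is a proper $3$-colouring. Consequently, for every digraph $D$ with $\chi(D)\le 4$, $\chi(\partial(\partial(D)))\le 3$.
   Context: For a digraph $D$ with arc set $A(D)$, $\chi(D)$ is the chromatic number of its underlying graph. $\partial(D)$ has vertex set $A(D)$, with an arc from $(x,y)$ to $(x',y')$ iff $y=x'$. A vertex of $\partial(\partial(\vec K_4))$ is an arc $((i,j),(j,k))$ of $\partial(\vec K_4)$, written $ijk$. *)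

theory Defs
  imports Main
begin

type_synonym 'a digraph = "'a set \<times> ('a \<times> 'a) set"

definition verts :: "'a digraph \<Rightarrow> 'a set" where "verts D = fst D"
definition arcs :: "'a digraph \<Rightarrow> ('a \<times> 'a) set" where "arcs D = snd D"

definition is_digraph :: "'a digraph \<Rightarrow> bool" where
  "is_digraph D \<longleftrightarrow> arcs D \<subseteq> verts D \<times> verts D \<and> (\<forall>x. (x, x) \<notin> arcs D)"

definition line_digraph :: "'a digraph \<Rightarrow> ('a \<times> 'a) digraph" where
  "line_digraph D = (arcs D,
     {(e, f). e \<in> arcs D \<and> f \<in> arcs D \<and> snd e = fst f})"

definition proper_colouring :: "'a digraph \<Rightarrow> ('a \<Rightarrow> 'c) \<Rightarrow> bool" where
  "proper_colouring D c \<longleftrightarrow> (\<forall>(u, v) \<in> arcs D. c u \<noteq> c v)"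

definition colourable :: "'a digraph \<Rightarrow> nat \<Rightarrow> bool" where
  "colourable D k \<longleftrightarrow> (\<exists>c :: 'a \<Rightarrow> nat. c ` verts D \<subseteq> {..<k} \<and> proper_colouring D c)"

text \<open>Chromatic number of the underlying graph (for finite loopless digraphs).\<close>
definition chi :: "'a digraph \<Rightarrow> nat" where
  "chi D = (LEAST k. colourable D k)"

definition K4 :: "nat digraph" where
  "K4 = ({1,2,3,4}, {(i, j). i \<in> {1,2,3,4} \<and> j \<in> {1,2,3,4} \<and> i \<noteq> j})"

end

theory Submission
  imports Defs
begin

definition g :: "nat \<Rightarrow> nat \<Rightarrow> nat \<Rightarrow> nat" where
  "g i j k = (if j \<noteq> 4 then j else if 1 \<notin> {i,k} then 1 else if 2 \<notin> {i,k} then 2 else 3)"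

lemma g_range: "a \<in> {1,2,3,4} \<Longrightarrow> b \<in> {1,2,3,4} \<Longrightarrow> c \<in> {1,2,3,4} \<Longrightarrow> a \<noteq> b \<Longrightarrow> b \<noteq> c
  \<Longrightarrow> g a b c \<in> {1,2,3}"
  unfolding g_def by (elim insertE emptyE; simp)

lemma g_proper: "a \<in> {1,2,3,4} \<Longrightarrow> b \<in> {1,2,3,4} \<Longrightarrow> c \<in> {1,2,3,4} \<Longrightarrow> d \<in> {1,2,3,4}
  \<Longrightarrow> a \<noteq> b \<Longrightarrow> b \<noteq> c \<Longrightarrow> c \<noteq> d \<Longrightarrow> g a b c \<noteq> g b c d"
  unfolding g_def by (elim insertE emptyE; simp)

lemma LL_arcs: "arcs (line_digraph (line_digraph D)) =
  {(((x,y),(y',z)),((u,v),(v',w))). (x,y) \<in> arcs D \<and> (y',z) \<in> arcs D \<and> y = y' \<and>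
      (u,v) \<in> arcs D \<and> (v',w) \<in> arcs D \<and> v = v' \<and> u = y \<and> v = z}"
  unfolding line_digraph_def arcs_def by auto

lemma LL_verts: "verts (line_digraph (line_digraph D)) =
  {((x,y),(y',z)). (x,y) \<in> arcs D \<and> (y',z) \<in> arcs D \<and> y = y'}"
  unfolding line_digraph_def arcs_def verts_def by auto

lemma K4_arcs: "arcs K4 = {(i, j). i \<in> {1,2,3,4} \<and> j \<in> {1,2,3,4} \<and> i \<noteq> j}"
  unfolding K4_def arcs_def by simp

lemma K4_arcD: "(i,j) \<in> arcs K4 \<Longrightarrow> i \<in> {1,2,3,4} \<and> j \<in> {1,2,3,4} \<and> i \<noteq> j"
  unfolding K4_arcs by blast

lemma K4_arcI: "i \<in> {1,2,3,4} \<Longrightarrow> j \<in> {1,2,3,4} \<Longrightarrow> i \<noteq> j \<Longrightarrow> (i,j) \<in> arcs K4"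
  unfolding K4_arcs by blast

lemma LL_vertsI: "(x,y) \<in> arcs D \<Longrightarrow> (y,z) \<in> arcs D \<Longrightarrow> ((x,y),(y,z)) \<in> verts (line_digraph (line_digraph D))"
  unfolding LL_verts by blast

lemma LL_vertsE: "p \<in> verts (line_digraph (line_digraph D)) \<Longrightarrow>
  (\<And>x y z. p = ((x,y),(y,z)) \<Longrightarrow> (x,y) \<in> arcs D \<Longrightarrow> (y,z) \<in> arcs D \<Longrightarrow> P) \<Longrightarrow> P"
  unfolding LL_verts by blast

lemma LL_arcsE: "(a,b) \<in> arcs (line_digraph (line_digraph D)) \<Longrightarrow>
  (\<And>x y z w. a = ((x,y),(y,z)) \<Longrightarrow> b = ((y,z),(z,w)) \<Longrightarrow> (x,y) \<in> arcs D \<Longrightarrow> (y,z) \<in> arcs D \<Longrightarrow> (z,w) \<in> arcs D \<Longrightarrow> P) \<Longrightarrow> P"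
  unfolding LL_arcs by auto

lemma part2:
  fixes c :: "(nat \<times> nat) \<times> (nat \<times> nat) \<Rightarrow> nat"
  assumes H: "\<forall>i j k. ((i, j), (j, k)) \<in> verts (line_digraph (line_digraph K4)) \<longrightarrow>
              (j \<noteq> 4 \<longrightarrow> c ((i, j), (j, k)) = j) \<and>
              (j = 4 \<longrightarrow> c ((i, j), (j, k)) \<in> {1, 2, 3} - {i, k})"
  shows "c ` verts (line_digraph (line_digraph K4)) \<subseteq> {1, 2, 3}
              \<and> proper_colouring (line_digraph (line_digraph K4)) c"
proof
  show "c ` verts (line_digraph (line_digraph K4)) \<subseteq> {1, 2, 3}"
  proof
    fix z assume "z \<in> c ` verts (line_digraph (line_digraph K4))"
    then obtain p where p: "p \<in> verts (line_digraph (line_digraph K4))" "z = c p" by blast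
    obtain i j k where pp: "p = ((i,j),(j,k))" and e: "(i,j) \<in> arcs K4" "(j,k) \<in> arcs K4"
      using p(1) by (rule LL_vertsE)
    have v: "((i,j),(j,k)) \<in> verts (line_digraph (line_digraph K4))" using p pp by simp
    have z: "z = c ((i,j),(j,k))" using p pp by simp
    have j: "j \<in> {1,2,3,4}" using K4_arcD[OF e(1)] by blast
    have Hj: "(j \<noteq> 4 \<longrightarrow> c ((i, j), (j, k)) = j) \<and>
              (j = 4 \<longrightarrow> c ((i, j), (j, k)) \<in> {1, 2, 3} - {i, k})" using H v by blast
    show "z \<in> {1,2,3}"
    proof (cases "j = 4")
      case True then show ?thesis using Hj z by blast
    next
      case False then show ?thesis using Hj z j by simp
    qed
  qed
next
  show "proper_colouring (line_digraph (line_digraph K4)) c"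
    unfolding proper_colouring_def
  proof (clarify)
    fix a b
    assume ab: "(a, b) \<in> arcs (line_digraph (line_digraph K4))" "c a = c b"
    obtain i j k l where a: "a = ((i,j),(j,k))" and b: "b = ((j,k),(k,l))"
      and e: "(i,j) \<in> arcs K4" "(j,k) \<in> arcs K4" "(k,l) \<in> arcs K4"
      using ab(1) by (rule LL_arcsE)
    have ij: "j \<noteq> k" using K4_arcD[OF e(2)] by blast
    have va: "a \<in> verts (line_digraph (line_digraph K4))" and vb: "b \<in> verts (line_digraph (line_digraph K4))"
      unfolding a b by (rule LL_vertsI[OF e(1,2)], rule LL_vertsI[OF e(2,3)])
    have A: "(j \<noteq> 4 \<longrightarrow> c a = j) \<and> (j = 4 \<longrightarrow> c a \<in> {1, 2, 3} - {i, k})"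
      using H va unfolding a by blast
    have B: "(k \<noteq> 4 \<longrightarrow> c b = k) \<and> (k = 4 \<longrightarrow> c b \<in> {1, 2, 3} - {j, l})"
      using H vb unfolding b by blast
    show False
    proof (cases "j = 4")
      case True
      then have "k \<noteq> 4" using ij by simp
      then show False using A B True ab(2) by auto
    next
      case False
      then have ca: "c a = j" using A by blast
      show False
      proof (cases "k = 4")
        case True
        then show False using B ca ab(2) by auto
      next
        case False
        then show False using B ca ab(2) ij by auto
      qed
    qed
  qed
qed

lemma chi_le: assumes "colourable D k" shows "chi D \<le> k"
  unfolding chi_def using assms by (rule Least_le)

lemma colourable_mono: "colourable D k \<Longrightarrow> k \<le> m \<Longrightarrow> colourable D m"
  unfolding colourable_def by (meson lessThan_subset_iff order_trans)

lemma finite_colourable: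
  assumes "is_digraph D" "finite (verts D)"
  shows "colourable D (card (verts D))"
proof -
  obtain h where h: "bij_betw h (verts D) {..<card (verts D)}"
    using assms(2) ex_bij_betw_finite_nat[of "verts D"] atLeast0LessThan by auto
  have "h ` verts D \<subseteq> {..<card (verts D)}" using h bij_betw_imp_surj_on by blast
  moreover have "proper_colouring D h" unfolding proper_colouring_def
  proof clarify
    fix u v assume uv: "(u,v) \<in> arcs D" "h u = h v"
    have "u \<in> verts D" "v \<in> verts D" using assms(1) uv(1) unfolding is_digraph_def by auto
    then have "u = v" using h uv(2) bij_betw_imp_inj_on inj_onD by metis
    then show False using assms(1) uv(1) unfolding is_digraph_def by auto
  qed
  ultimately show ?thesis unfolding colourable_def by blast
qed

lemma part3:
  assumes D: "is_digraph D" "finite (verts D)" "chi D \<le> 4"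
  shows "chi (line_digraph (line_digraph D)) \<le> 3"
proof -
  have "colourable D (chi D)" unfolding chi_def
    using finite_colourable[OF D(1,2)] by (rule LeastI)
  then have "colourable D 4" using D(3) colourable_mono by blast
  then obtain f :: "'a \<Rightarrow> nat" where f: "f ` verts D \<subseteq> {..<4}" "proper_colouring D f"
    unfolding colourable_def by blast
  define F where "F x = f x + 1" for x
  have Fr: "F x \<in> {1,2,3,4}" if "x \<in> verts D" for x
    using f(1) that unfolding F_def by fastforce
  have Fa: "F x \<noteq> F y" if "(x,y) \<in> arcs D" for x y
    using f(2) that unfolding F_def proper_colouring_def by auto
  have Fv: "x \<in> verts D \<and> y \<in> verts D" if "(x,y) \<in> arcs D" for x y
    using D(1) that unfolding is_digraph_def by auto
  define cc :: "('a \<times> 'a) \<times> ('a \<times> 'a) \<Rightarrow> nat" where "cc p = g (F (fst (fst p))) (F (snd (fst p))) (F (snd (snd p))) - 1" for p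
  have "colourable (line_digraph (line_digraph D)) 3" unfolding colourable_def
  proof (intro exI conjI)
    show "cc ` verts (line_digraph (line_digraph D)) \<subseteq> {..<3}"
    proof
      fix z assume "z \<in> cc ` verts (line_digraph (line_digraph D))"
      then obtain x y w where xy: "(x,y) \<in> arcs D" "(y,w) \<in> arcs D" and z: "z = cc ((x,y),(y,w))"
        unfolding LL_verts by auto
      have "g (F x) (F y) (F w) \<in> {1,2,3}"
        by (rule g_range) (use Fr Fv Fa xy in blast)+
      then show "z \<in> {..<3}" using z unfolding cc_def by auto
    qed
    show "proper_colouring (line_digraph (line_digraph D)) cc"
      unfolding proper_colouring_def
    proof clarify
      fix a b assume ab: "(a,b) \<in> arcs (line_digraph (line_digraph D))" "cc a = cc b"
      then obtain x y z w where a: "a = ((x,y),(y,z))" and b: "b = ((y,z),(z,w))"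
        and arc: "(x,y) \<in> arcs D" "(y,z) \<in> arcs D" "(z,w) \<in> arcs D"
        unfolding LL_arcs by auto
      have m: "F x \<in> {1,2,3,4}" "F y \<in> {1,2,3,4}" "F z \<in> {1,2,3,4}" "F w \<in> {1,2,3,4}"
        "F x \<noteq> F y" "F y \<noteq> F z" "F z \<noteq> F w"
        using Fr Fv Fa arc by blast+
      have r: "g (F x) (F y) (F z) \<in> {1,2,3}" "g (F y) (F z) (F w) \<in> {1,2,3}"
        using g_range m by blast+
      have "g (F x) (F y) (F z) \<noteq> g (F y) (F z) (F w)" by (rule g_proper[OF m])
      then show False using ab(2) r unfolding a b cc_def by auto
    qed
  qed
  then show ?thesis by (rule chi_le)
qed

lemma part1: "chi (line_digraph (line_digraph K4)) \<le> 3"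
proof -
  define cc :: "(nat \<times> nat) \<times> (nat \<times> nat) \<Rightarrow> nat" where "cc p = g (fst (fst p)) (snd (fst p)) (snd (snd p)) - 1" for p
  have "colourable (line_digraph (line_digraph K4)) 3" unfolding colourable_def
  proof (intro exI conjI)
    show "cc ` verts (line_digraph (line_digraph K4)) \<subseteq> {..<3}"
    proof
      fix z assume "z \<in> cc ` verts (line_digraph (line_digraph K4))"
      then obtain p where p: "p \<in> verts (line_digraph (line_digraph K4))" "z = cc p" by blast
      obtain x y w where pp: "p = ((x,y),(y,w))" and xy: "(x,y) \<in> arcs K4" "(y,w) \<in> arcs K4"
        using p(1) by (rule LL_vertsE)
      have z: "z = cc ((x,y),(y,w))" using p pp by simp
      have m: "x \<in> {1,2,3,4}" "y \<in> {1,2,3,4}" "w \<in> {1,2,3,4}"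
        "x \<noteq> y" "y \<noteq> w"
        using K4_arcD[OF xy(1)] K4_arcD[OF xy(2)] by blast+
      have "g x y w \<in> {1,2,3}" by (rule g_range[OF m])
      then show "z \<in> {..<3}" using z unfolding cc_def by auto
    qed
    show "proper_colouring (line_digraph (line_digraph K4)) cc"
      unfolding proper_colouring_def
    proof clarify
      fix a b assume ab: "(a,b) \<in> arcs (line_digraph (line_digraph K4))" "cc a = cc b"
      obtain x y z w where a: "a = ((x,y),(y,z))" and b: "b = ((y,z),(z,w))"
        and arc: "(x,y) \<in> arcs K4" "(y,z) \<in> arcs K4" "(z,w) \<in> arcs K4"
        using ab(1) by (rule LL_arcsE)
      have m: "x \<in> {1,2,3,4}" "y \<in> {1,2,3,4}" "z \<in> {1,2,3,4}" "w \<in> {1,2,3,4}"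
        "x \<noteq> y" "y \<noteq> z" "z \<noteq> w"
        using K4_arcD[OF arc(1)] K4_arcD[OF arc(2)] K4_arcD[OF arc(3)] by blast+
      have r: "g x y z \<in> {1,2,3}" "g y z w \<in> {1,2,3}"
        using g_range m by blast+
      have "g x y z \<noteq> g y z w" by (rule g_proper[OF m])
      then show False using ab(2) r unfolding a b cc_def by auto
    qed
  qed
  then show ?thesis by (rule chi_le)
qed

theorem mainTheorem12:
  shows "chi (line_digraph (line_digraph K4)) \<le> 3
    \<and> (\<forall>c :: (nat \<times> nat) \<times> (nat \<times> nat) \<Rightarrow> nat.
          (\<forall>i j k. ((i, j), (j, k)) \<in> verts (line_digraph (line_digraph K4)) \<longrightarrow>
              (j \<noteq> 4 \<longrightarrow> c ((i, j), (j, k)) = j) \<and>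
              (j = 4 \<longrightarrow> c ((i, j), (j, k)) \<in> {1, 2, 3} - {i, k}))
          \<longrightarrow> c ` verts (line_digraph (line_digraph K4)) \<subseteq> {1, 2, 3}
              \<and> proper_colouring (line_digraph (line_digraph K4)) c)
    \<and> (\<forall>D :: 'a digraph. is_digraph D \<and> finite (verts D) \<and> chi D \<le> 4 \<longrightarrow>
          chi (line_digraph (line_digraph D)) \<le> 3)"
proof (intro conjI)
  show "chi (line_digraph (line_digraph K4)) \<le> 3" by (rule part1)
next
  show "\<forall>c :: (nat \<times> nat) \<times> (nat \<times> nat) \<Rightarrow> nat.
          (\<forall>i j k. ((i, j), (j, k)) \<in> verts (line_digraph (line_digraph K4)) \<longrightarrow>
              (j \<noteq> 4 \<longrightarrow> c ((i, j), (j, k)) = j) \<and>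
              (j = 4 \<longrightarrow> c ((i, j), (j, k)) \<in> {1, 2, 3} - {i, k}))
          \<longrightarrow> c ` verts (line_digraph (line_digraph K4)) \<subseteq> {1, 2, 3}
              \<and> proper_colouring (line_digraph (line_digraph K4)) c"
    using part2 by blast
next
  show "\<forall>D :: 'a digraph. is_digraph D \<and> finite (verts D) \<and> chi D \<le> 4 \<longrightarrow>
          chi (line_digraph (line_digraph D)) \<le> 3" using part3 by blast
qed

end
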